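(* If $b,c\ne 0$, then $\check{f}(x)$ has at most two roots. Furthermore, exactly one of the following statements is true. 1. $\check{f}$ has exactly two roots $x_0$ and $x_1$ at which it changes sign. The derivative $\check{f}'$ is nonzero at $x_0$ and $x_1$, and either $a<1,b<0,c>0$ or $a>1,b>0,c<0$. 2. $\check{f}$ has exactly one root $x_0$ at which it does not change sign. The derivative $\check{f}'$ also has a root at $x_0$, and either $a<1,b<0,c>0$ or $a>1,b>0,c<0$. 3. $\check{f}$ has exactly one root $x_0$ at which it changes sign. The derivative $\check{f}'$ is nonzero at $x_0$, and $bc>0$. 4. $\check{f}$ has no roots, and $bc<0$.
   Context: A function $f:\mathbb{R}^+\to\mathbb{R}^+$ is called strongly hyperbolic if: (1) $\lim_{x\to 0+} f(x)=+\infty$ and $\lim_{x\to+\infty} f(x)=0$; (2) $f$ is strictly convex; (3) for each $b\in\mathbb{R}$, $\lim_{x\to+\infty} f(x+b)/f(x)=1$; (4) $f$ is differentiable; (5) $\ln|f'(x)|$ is strictly convex. Let $f$ be a strongly hyperbolic function, let $a>0$, $b,c\in\mathbb{R}$, and define $\check{f}:(\max\{-b,0\},\infty)\to\mathbb{R}$ by $\check{f}(x)=af(x+b)+c-f(x)$. *)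

theory Defs
  imports "HOL-Analysis.Analysis"
begin

definition strictly_convex_on :: "real set \<Rightarrow> (real \<Rightarrow> real) \<Rightarrow> bool" where
  "strictly_convex_on S g \<longleftrightarrow> convex S \<and>
     (\<forall>x\<in>S. \<forall>y\<in>S. x \<noteq> y \<longrightarrow> (\<forall>t. 0 < t \<and> t < 1 \<longrightarrow>
        g ((1 - t) * x + t * y) < (1 - t) * g x + t * g y))"

definition strongly_hyperbolic :: "(real \<Rightarrow> real) \<Rightarrow> bool" where
  "strongly_hyperbolic f \<longleftrightarrow>
     (\<forall>x>0. f x > 0) \<and>
     filterlim f at_top (at_right 0) \<and>
     (f \<longlongrightarrow> 0) at_top \<and>
     strictly_convex_on {0<..} f \<and>
     (\<forall>b::real. ((\<lambda>x. f (x + b) / f x) \<longlongrightarrow> 1) at_top) \<and>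
     (\<forall>x>0. f differentiable (at x)) \<and>
     strictly_convex_on {0<..} (\<lambda>x. ln \<bar>deriv f x\<bar>)"

definition fcheck :: "(real \<Rightarrow> real) \<Rightarrow> real \<Rightarrow> real \<Rightarrow> real \<Rightarrow> real \<Rightarrow> real" where
  "fcheck f a b c x = a * f (x + b) + c - f x"

definition fcheck_dom :: "real \<Rightarrow> real set" where
  "fcheck_dom b = {max (- b) 0 <..}"

definition roots :: "(real \<Rightarrow> real) \<Rightarrow> real set \<Rightarrow> real set" where
  "roots g S = {x \<in> S. g x = 0}"

definition changes_sign_at :: "(real \<Rightarrow> real) \<Rightarrow> real \<Rightarrow> bool" where
  "changes_sign_at g x0 \<longleftrightarrow> (\<exists>e>0.
     ((\<forall>x\<in>{x0 - e<..<x0}. g x < 0) \<and> (\<forall>x\<in>{x0<..<x0 + e}. g x > 0)) \<or>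
     ((\<forall>x\<in>{x0 - e<..<x0}. g x > 0) \<and> (\<forall>x\<in>{x0<..<x0 + e}. g x < 0)))"

definition keeps_sign_at :: "(real \<Rightarrow> real) \<Rightarrow> real \<Rightarrow> bool" where
  "keeps_sign_at g x0 \<longleftrightarrow> (\<exists>e>0.
     (\<forall>x. 0 < \<bar>x - x0\<bar> \<and> \<bar>x - x0\<bar> < e \<longrightarrow> g x > 0) \<or>
     (\<forall>x. 0 < \<bar>x - x0\<bar> \<and> \<bar>x - x0\<bar> < e \<longrightarrow> g x < 0))"

definition exactly_one :: "bool list \<Rightarrow> bool" where
  "exactly_one ps \<longleftrightarrow> length (filter id ps) = 1"

end

theory Submission
  imports Defs
begin



lemma AL_struct:
  fixes g g' psi :: "real \<Rightarrow> real" and L :: real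
  assumes der: "\<And>x. L < x \<Longrightarrow> (g has_real_derivative g' x) (at x)"
   and sgn: "\<And>x. L < x \<Longrightarrow> g' x < 0 \<longleftrightarrow> psi x < 0"
   and sg0: "\<And>x. L < x \<Longrightarrow> g' x = 0 \<longleftrightarrow> psi x = 0"
   and mono: "(\<forall>x y. L < x \<longrightarrow> x < y \<longrightarrow> psi x < psi y) \<or> (\<forall>x y. L < x \<longrightarrow> x < y \<longrightarrow> psi y < psi x)"
   and lim: "filterlim g at_bot (at_right L)"
  shows "((\<forall>x y. L<x \<longrightarrow> x<y \<longrightarrow> g x < g y) \<and> (\<forall>x>L. g' x \<noteq> 0)) \<or>
    (\<exists>xs>L. g' xs = 0 \<and> (\<forall>x y. L<x \<longrightarrow> x<y \<longrightarrow> y \<le> xs \<longrightarrow> g x < g y)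
       \<and> (\<forall>x y. xs \<le> x \<longrightarrow> x<y \<longrightarrow> g y < g x) \<and> (\<forall>x>L. x \<noteq> xs \<longrightarrow> g' x \<noteq> 0))"
proof -
  have cont: "continuous_on {L<..} g"
    using der by (meson DERIV_isCont continuous_at_imp_continuous_on greaterThan_iff)
  have rolle: "\<exists>w. u < w \<and> w < v \<and> g' w = 0" if "L < u" "u < v" "g u = g v" for u v
  proof -
    have "\<exists>z. u < z \<and> z < v \<and> (*) (g' z) = (\<lambda>v. 0)"
    proof (rule Rolle_deriv[OF that(2,3)])
      show "continuous_on {u..v} g" by (rule continuous_on_subset[OF cont]) (use that in auto)
      fix x assume "u < x" "x < v"
      then show "(g has_derivative (*) (g' x)) (at x)"
        using der[of x] that by (simp add: has_field_derivative_def)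
    qed
    then obtain z where "u < z" "z < v" "(*) (g' z) = (\<lambda>v. 0)" by blast
    then show ?thesis by (metis mult.right_neutral)
  qed
  have injm: "strict_mono_on S g \<or> strict_antimono_on S g"
    if S: "S \<subseteq> {L<..}" "is_interval S"
      and nz: "\<And>u v w. u \<in> S \<Longrightarrow> v \<in> S \<Longrightarrow> u < w \<Longrightarrow> w < v \<Longrightarrow> g' w \<noteq> 0" for S
  proof -
    have "inj_on g S"
    proof (rule inj_onI, rule ccontr)
      fix u v assume uv: "u \<in> S" "v \<in> S" "g u = g v" "u \<noteq> v"
      show False
      proof (cases "u < v")
        case True
        then show False using rolle[of u v] uv S nz[of u v] by auto
      next
        case False
        then show False using rolle[of v u] uv S nz[of v u] by auto
      qed
    qed
    then show ?thesis
      using injective_eq_monotone_map[OF S(2) continuous_on_subset[OF cont S(1)]] by blast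
  qed
  have notanti: "\<not> strict_antimono_on S g" if "L < m" "{L<..m} \<subseteq> S" for S m
  proof
    assume anti: "strict_antimono_on S g"
    have "eventually (\<lambda>x. g x \<le> g m - 1) (at_right L)"
      using lim by (simp add: filterlim_at_bot)
    then obtain b where b: "b > L" "\<And>y. y > L \<Longrightarrow> y < b \<Longrightarrow> g y \<le> g m - 1"
      unfolding eventually_at_right_field by blast
    define y where "y = (L + min b m) / 2"
    have y: "L < y" "y < b" "y < m" using b that by (auto simp: y_def)
    have "y \<in> S" "m \<in> S" using y that by auto
    then have "g m < g y" using anti y unfolding monotone_on_def by auto
    with b(2)[OF y(1,2)] show False by simp
  qed
  show ?thesis
  proof (cases "\<exists>xs>L. g' xs = 0")
    case False
    then have "strict_mono_on {L<..} g \<or> strict_antimono_on {L<..} g"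
      by (intro injm) (auto simp: is_interval_oi)
    moreover have "\<not> strict_antimono_on {L<..} g"
      by (rule notanti[of "L+1"]) auto
    ultimately have "strict_mono_on {L<..} g" by blast
    then have "\<forall>x y. L<x \<longrightarrow> x<y \<longrightarrow> g x < g y" unfolding monotone_on_def by auto
    with False show ?thesis by auto
  next
    case True
    then obtain xs where xs: "xs > L" "g' xs = 0" by blast
    have psi0: "psi xs = 0" using sg0 xs by auto
    have uniq: "x = xs" if "x > L" "g' x = 0" for x
    proof -
      have "psi x = 0" using sg0 that by auto
      show ?thesis
      proof (rule ccontr)
        assume "x \<noteq> xs"
        then consider "x < xs" | "xs < x" by linarith
        then have "psi x < psi xs \<or> psi xs < psi x"
        proof cases
          case 1 then show ?thesis using mono that(1) by blast
        next
          case 2 then show ?thesis using mono xs(1) by blast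
        qed
        then show False using \<open>psi x = 0\<close> psi0 by simp
      qed
    qed
    have "strict_mono_on {L<..xs} g \<or> strict_antimono_on {L<..xs} g"
    proof (rule injm)
      show "{L<..xs} \<subseteq> {L<..}" using xs by auto
      show "is_interval {L<..xs}" by (simp add: is_interval_oc is_interval_ci)
      fix u v w assume "u \<in> {L<..xs}" "v \<in> {L<..xs}" "u < w" "w < v"
      then show "g' w \<noteq> 0" using uniq[of w] xs by auto
    qed
    moreover have "\<not> strict_antimono_on {L<..xs} g"
      by (rule notanti[OF xs(1)]) auto
    ultimately have left: "strict_mono_on {L<..xs} g" by blast
    have "strict_mono_on {xs..} g \<or> strict_antimono_on {xs..} g"
    proof (rule injm)
      show "{xs..} \<subseteq> {L<..}" using xs by auto
      show "is_interval {xs..}" by (simp add: is_interval_oc is_interval_ci)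
      fix u v w assume "u \<in> {xs..}" "v \<in> {xs..}" "u < w" "w < v"
      then show "g' w \<noteq> 0" using uniq[of w] xs by auto
    qed
    moreover have "\<not> strict_mono_on {xs..} g"
    proof
      assume right: "strict_mono_on {xs..} g"
      have inc: "g x < g y" if "L < x" "x < y" for x y
      proof -
        consider "y \<le> xs" | "xs \<le> x" | "x < xs" "xs < y" by linarith
        then show ?thesis
        proof cases
          case 1 then show ?thesis using left that unfolding monotone_on_def by auto
        next
          case 2 then show ?thesis using right that unfolding monotone_on_def by auto
        next
          case 3
          then have "g x < g xs" "g xs < g y" using left right that unfolding monotone_on_def by auto
          then show ?thesis by simp
        qed
      qed
      obtain y where y: "y > L" "psi y < 0"
      proof (cases "\<forall>x y. L < x \<longrightarrow> x < y \<longrightarrow> psi x < psi y")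
        case True
        then have "psi ((L + xs)/2) < psi xs" using xs by auto
        then show ?thesis using that[of "(L+xs)/2"] xs psi0 by auto
      next
        case False
        with mono have "\<forall>x y. L < x \<longrightarrow> x < y \<longrightarrow> psi y < psi x" by blast
        then have "psi (xs + 1) < psi xs" using xs by auto
        then show ?thesis using that[of "xs+1"] xs psi0 by auto
      qed
      then have "g' y < 0" using sgn by auto
      from DERIV_neg_dec_right[OF der[OF y(1)] this] obtain d where
        d: "d > 0" "\<And>h. h > 0 \<Longrightarrow> h < d \<Longrightarrow> g y > g (y + h)" by blast
      have "g y > g (y + d/2)" using d by auto
      moreover have "g y < g (y + d/2)" using inc y d by auto
      ultimately show False by simp
    qed
    ultimately have right: "strict_antimono_on {xs..} g" by blast
    have l2: "\<forall>x y. L<x \<longrightarrow> x<y \<longrightarrow> y \<le> xs \<longrightarrow> g x < g y"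
    proof (intro allI impI)
      fix x y assume "L < x" "x < y" "y \<le> xs"
      then have "x \<in> {L<..xs}" "y \<in> {L<..xs}" by auto
      with left \<open>x < y\<close> show "g x < g y" unfolding monotone_on_def by blast
    qed
    have r2: "\<forall>x y. xs \<le> x \<longrightarrow> x<y \<longrightarrow> g y < g x"
    proof (intro allI impI)
      fix x y assume "xs \<le> x" "x < y"
      then have "x \<in> {xs..}" "y \<in> {xs..}" by auto
      with right \<open>x < y\<close> show "g y < g x" unfolding monotone_on_def by blast
    qed
    have "\<forall>x>L. x \<noteq> xs \<longrightarrow> g' x \<noteq> 0" using uniq by blast
    with l2 r2 xs show ?thesis by blast
  qed
qed


lemma AL_common:
  fixes g g' psi :: "real \<Rightarrow> real" and L c :: real
  assumes der: "\<And>x. L < x \<Longrightarrow> (g has_real_derivative g' x) (at x)"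
   and sgn: "\<And>x. L < x \<Longrightarrow> g' x < 0 \<longleftrightarrow> psi x < 0"
   and sg0: "\<And>x. L < x \<Longrightarrow> g' x = 0 \<longleftrightarrow> psi x = 0"
   and mono: "(\<forall>x y. L < x \<longrightarrow> x < y \<longrightarrow> psi x < psi y) \<or> (\<forall>x y. L < x \<longrightarrow> x < y \<longrightarrow> psi y < psi x)"
   and lim: "filterlim g at_bot (at_right L)"
   and top: "(g \<longlongrightarrow> c) at_top"
  shows "continuous_on {L<..} g \<and> (\<forall>m>L. \<exists>p. L < p \<and> p < m \<and> g p < 0)
   \<and> (c > 0 \<longrightarrow> (\<forall>m. \<exists>q. q > m \<and> g q > 0))
   \<and> (c < 0 \<longrightarrow> (\<forall>m. \<exists>q. q > m \<and> g q < 0))"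
proof -
  have P1: "continuous_on {L<..} g"
    using der by (meson DERIV_isCont continuous_at_imp_continuous_on greaterThan_iff)
  have P2: "\<exists>p. L < p \<and> p < m \<and> g p < 0" if "L < m" for m
  proof -
    have "eventually (\<lambda>x. g x \<le> - 1) (at_right L)"
      using lim by (simp add: filterlim_at_bot)
    then obtain b where b: "b > L" "\<And>y. y > L \<Longrightarrow> y < b \<Longrightarrow> g y \<le> - 1"
      unfolding eventually_at_right_field by blast
    define y where "y = (L + min b m) / 2"
    have y: "L < y" "y < b" "y < m" using b that by (auto simp: y_def)
    show ?thesis using y b(2)[OF y(1,2)] by (intro exI[of _ y]) auto
  qed
  have P3: "\<exists>q. q > m \<and> g q > 0" if "c > 0" for m
  proof -
    have "eventually (\<lambda>x. g x > 0 \<and> x > m) at_top"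
      using order_tendstoD(1)[OF top that] eventually_gt_at_top[of m] by eventually_elim auto
    then obtain q where "g q > 0 \<and> q > m" using eventually_happens'[OF trivial_limit_at_top_linorder] by blast
    then show ?thesis by blast
  qed
  have P4: "\<exists>q. q > m \<and> g q < 0" if "c < 0" for m
  proof -
    have "eventually (\<lambda>x. g x < 0 \<and> x > m) at_top"
      using order_tendstoD(2)[OF top that] eventually_gt_at_top[of m] by eventually_elim auto
    then obtain q where "g q < 0 \<and> q > m" using eventually_happens'[OF trivial_limit_at_top_linorder] by blast
    then show ?thesis by blast
  qed
  show ?thesis using P1 P2 P3 P4 by blast
qed




lemma AL_pos:
  fixes g g' psi :: "real \<Rightarrow> real" and L c :: real
  assumes der: "\<And>x. L < x \<Longrightarrow> (g has_real_derivative g' x) (at x)"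
   and sgn: "\<And>x. L < x \<Longrightarrow> g' x < 0 \<longleftrightarrow> psi x < 0"
   and sg0: "\<And>x. L < x \<Longrightarrow> g' x = 0 \<longleftrightarrow> psi x = 0"
   and mono: "(\<forall>x y. L < x \<longrightarrow> x < y \<longrightarrow> psi x < psi y) \<or> (\<forall>x y. L < x \<longrightarrow> x < y \<longrightarrow> psi y < psi x)"
   and lim: "filterlim g at_bot (at_right L)"
   and top: "(g \<longlongrightarrow> c) at_top"
   and cpos: "c > 0"
  shows "\<exists>x0. {x. L < x \<and> g x = 0} = {x0} \<and> changes_sign_at g x0 \<and> g' x0 \<noteq> 0"
proof -
  have C0: "continuous_on {L<..} g \<and> (\<forall>m>L. \<exists>p. L < p \<and> p < m \<and> g p < 0)
   \<and> (c > 0 \<longrightarrow> (\<forall>m. \<exists>q. q > m \<and> g q > 0))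
   \<and> (c < 0 \<longrightarrow> (\<forall>m. \<exists>q. q > m \<and> g q < 0))" by (rule AL_common[OF der sgn sg0 mono lim top])
  have C1: "continuous_on {L<..} g" using C0 by blast
  have C2: "\<And>m. L < m \<Longrightarrow> \<exists>p. L < p \<and> p < m \<and> g p < 0" using C0 by blast
  have C3: "\<And>m. c > 0 \<Longrightarrow> \<exists>q. q > m \<and> g q > 0" using C0 by blast
  have C4: "\<And>m. c < 0 \<Longrightarrow> \<exists>q. q > m \<and> g q < 0" using C0 by blast
  note S = AL_struct[OF der sgn sg0 mono lim]
  have ivt: "\<exists>x. p \<le> x \<and> x \<le> q \<and> g x = 0" if "L < p" "p \<le> q" "g p \<le> 0" "0 \<le> g q" for p q
    by (rule IVT'[OF that(3,4,2)]) (rule continuous_on_subset[OF C1], use that in auto)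
  from S show ?thesis
  proof
    assume A: "(\<forall>x y. L<x \<longrightarrow> x<y \<longrightarrow> g x < g y) \<and> (\<forall>x>L. g' x \<noteq> 0)"
    then have inc: "\<And>x y. L<x \<Longrightarrow> x<y \<Longrightarrow> g x < g y" and nz: "\<And>x. L < x \<Longrightarrow> g' x \<noteq> 0"
      by blast+
    obtain p where p: "L < p" "g p < 0" using C2[of "L+1"] by auto
    obtain q where q: "q > p" "g q > 0" using C3[OF cpos, of p] by auto
    have "\<exists>x. p \<le> x \<and> x \<le> q \<and> g x = 0" by (rule ivt) (use p q in auto)
    then obtain x0 where x0: "p \<le> x0" "x0 \<le> q" "g x0 = 0" by blast
    have Lx0: "L < x0" using p x0 by linarith
    have Z: "{x. L < x \<and> g x = 0} = {x0}"
    proof safe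
      fix x assume x: "L < x" "g x = 0"
      show "x = x0"
      proof (rule ccontr)
        assume "x \<noteq> x0"
        then consider "x < x0" | "x0 < x" by linarith
        then show False
        proof cases
          case 1 then show False using inc[OF x(1) 1] x x0 by simp
        next
          case 2 then show False using inc[OF Lx0 2] x x0 by simp
        qed
      qed
    qed (use x0 Lx0 in auto)
    have "changes_sign_at g x0"
      unfolding changes_sign_at_def
    proof (intro exI[of _ "x0 - L"] conjI disjI1 ballI)
      show "0 < x0 - L" using Lx0 by simp
    next
      fix x assume "x \<in> {x0 - (x0 - L)<..<x0}"
      then have "L < x" "x < x0" by auto
      then show "g x < 0" using inc[of x x0] x0 by simp
    next
      fix x assume "x \<in> {x0<..<x0 + (x0 - L)}"
      then have "x0 < x" by auto
      then show "g x > 0" using inc[OF Lx0, of x] x0 by simp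
    qed
    then show ?thesis using Z nz[OF Lx0] by blast
  next
    assume "\<exists>xs>L. g' xs = 0 \<and> (\<forall>x y. L<x \<longrightarrow> x<y \<longrightarrow> y \<le> xs \<longrightarrow> g x < g y)
       \<and> (\<forall>x y. xs \<le> x \<longrightarrow> x<y \<longrightarrow> g y < g x) \<and> (\<forall>x>L. x \<noteq> xs \<longrightarrow> g' x \<noteq> 0)"
    then obtain xs where xs: "xs > L" "g' xs = 0"
      and lf: "\<And>x y. L<x \<Longrightarrow> x<y \<Longrightarrow> y \<le> xs \<Longrightarrow> g x < g y"
      and rt: "\<And>x y. xs \<le> x \<Longrightarrow> x<y \<Longrightarrow> g y < g x"
      and nz: "\<And>x. x > L \<Longrightarrow> x \<noteq> xs \<Longrightarrow> g' x \<noteq> 0" by blast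
    have gtc: "g x > c" if "xs \<le> x" for x
    proof -
      have ev: "eventually (\<lambda>y. g y \<le> g (x+1)) at_top"
        using eventually_ge_at_top[of "x+1"]
      proof eventually_elim
        case (elim y)
        show ?case
        proof (cases "y = x+1")
          case False
          then have "x + 1 < y" using elim by simp
          then show ?thesis using rt[of "x+1" y] that by simp
        qed simp
      qed
      have "c \<le> g (x+1)"
        by (rule tendsto_upperbound[OF top ev trivial_limit_at_top_linorder])
      moreover have "g (x+1) < g x" using rt that by auto
      ultimately show ?thesis by simp
    qed
    obtain p where p: "L < p" "p < xs" "g p < 0" using C2[OF xs(1)] by auto
    obtain x0 where x0: "p \<le> x0" "x0 \<le> xs" "g x0 = 0" using ivt[of p xs] p gtc[of xs] cpos by auto
    have x0xs: "x0 < xs" using x0 gtc[of xs] cpos by (cases "x0 = xs") auto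
    have Z: "{x. L < x \<and> g x = 0} = {x0}"
    proof safe
      fix x assume x: "L < x" "g x = 0"
      show "x = x0"
      proof (rule ccontr)
        assume "x \<noteq> x0"
        then consider "x < x0" | "x0 < x \<and> x < xs" | "xs \<le> x" by linarith
        then show False
        proof cases
          case 1 then show False using lf[of x x0] x x0 x0xs by auto
        next
          case 2 then show False using lf[of x0 x] x x0 p by auto
        next
          case 3 then show False using gtc[of x] x cpos by auto
        qed
      qed
    qed (use x0 p in auto)
    have "changes_sign_at g x0"
      unfolding changes_sign_at_def
    proof (intro exI[of _ "min (x0 - L) (xs - x0)"] conjI disjI1 ballI)
      show "0 < min (x0 - L) (xs - x0)" using x0 p x0xs by auto
    next
      fix x assume "x \<in> {x0 - min (x0 - L) (xs - x0)<..<x0}"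
      then show "g x < 0" using lf[of x x0] x0 x0xs by auto
    next
      fix x assume "x \<in> {x0<..<x0 + min (x0 - L) (xs - x0)}"
      then show "g x > 0" using lf[of x0 x] x0 p by auto
    qed
    then show ?thesis using Z nz[of x0] x0 p x0xs by auto
  qed
qed




lemma AL_neg:
  fixes g g' psi :: "real \<Rightarrow> real" and L c :: real
  assumes der: "\<And>x. L < x \<Longrightarrow> (g has_real_derivative g' x) (at x)"
   and sgn: "\<And>x. L < x \<Longrightarrow> g' x < 0 \<longleftrightarrow> psi x < 0"
   and sg0: "\<And>x. L < x \<Longrightarrow> g' x = 0 \<longleftrightarrow> psi x = 0"
   and mono: "(\<forall>x y. L < x \<longrightarrow> x < y \<longrightarrow> psi x < psi y) \<or> (\<forall>x y. L < x \<longrightarrow> x < y \<longrightarrow> psi y < psi x)"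
   and lim: "filterlim g at_bot (at_right L)"
   and top: "(g \<longlongrightarrow> c) at_top"
   and cneg: "c < 0"
  shows "{x. L < x \<and> g x = 0} = {} \<or>
     (\<exists>x0. {x. L < x \<and> g x = 0} = {x0} \<and> keeps_sign_at g x0 \<and> g' x0 = 0) \<or>
     (\<exists>x0 x1. x0 \<noteq> x1 \<and> {x. L < x \<and> g x = 0} = {x0, x1} \<and> changes_sign_at g x0 \<and>
        changes_sign_at g x1 \<and> g' x0 \<noteq> 0 \<and> g' x1 \<noteq> 0)"
proof -
  have C0: "continuous_on {L<..} g \<and> (\<forall>m>L. \<exists>p. L < p \<and> p < m \<and> g p < 0)
   \<and> (c > 0 \<longrightarrow> (\<forall>m. \<exists>q. q > m \<and> g q > 0))
   \<and> (c < 0 \<longrightarrow> (\<forall>m. \<exists>q. q > m \<and> g q < 0))" by (rule AL_common[OF der sgn sg0 mono lim top])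
  have C1: "continuous_on {L<..} g" using C0 by blast
  have C2: "\<And>m. L < m \<Longrightarrow> \<exists>p. L < p \<and> p < m \<and> g p < 0" using C0 by blast
  have C4: "\<And>m. \<exists>q. q > m \<and> g q < 0" using C0 cneg by blast
  note S = AL_struct[OF der sgn sg0 mono lim]
  from S show ?thesis
  proof
    assume A: "(\<forall>x y. L<x \<longrightarrow> x<y \<longrightarrow> g x < g y) \<and> (\<forall>x>L. g' x \<noteq> 0)"
    then have inc: "\<And>x y. L<x \<Longrightarrow> x<y \<Longrightarrow> g x < g y" by blast
    have "g x < 0" if "L < x" for x
    proof -
      have ev: "eventually (\<lambda>y. g (x+1) \<le> g y) at_top"
        using eventually_ge_at_top[of "x+1"]
      proof eventually_elim
        case (elim y)
        show ?case
        proof (cases "y = x+1")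
          case False
          then have "x + 1 < y" using elim by simp
          then show ?thesis using inc[of "x+1" y] that by simp
        qed simp
      qed
      have "g (x+1) \<le> c"
        by (rule tendsto_lowerbound[OF top ev trivial_limit_at_top_linorder])
      moreover have "g x < g (x+1)" using inc that by simp
      ultimately show ?thesis using cneg by simp
    qed
    then have "{x. L < x \<and> g x = 0} = {}" by force
    then show ?thesis by blast
  next
    assume "\<exists>xs>L. g' xs = 0 \<and> (\<forall>x y. L<x \<longrightarrow> x<y \<longrightarrow> y \<le> xs \<longrightarrow> g x < g y)
       \<and> (\<forall>x y. xs \<le> x \<longrightarrow> x<y \<longrightarrow> g y < g x) \<and> (\<forall>x>L. x \<noteq> xs \<longrightarrow> g' x \<noteq> 0)"
    then obtain xs where xs: "xs > L" "g' xs = 0"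
      and lf: "\<And>x y. L<x \<Longrightarrow> x<y \<Longrightarrow> y \<le> xs \<Longrightarrow> g x < g y"
      and rt: "\<And>x y. xs \<le> x \<Longrightarrow> x<y \<Longrightarrow> g y < g x"
      and nz: "\<And>x. x > L \<Longrightarrow> x \<noteq> xs \<Longrightarrow> g' x \<noteq> 0" by blast
    have gle: "g x < g xs" if xx: "L < x" "x \<noteq> xs" for x
    proof -
      consider "x < xs" | "xs < x" using xx by linarith
      then show ?thesis
      proof cases
        case 1 then show ?thesis using lf[OF xx(1) 1] by simp
      next
        case 2 then show ?thesis using rt[of xs x] by simp
      qed
    qed
    consider "g xs < 0" | "g xs = 0" | "g xs > 0" by linarith
    then show ?thesis
    proof cases
      case 1
      then have "{x. L < x \<and> g x = 0} = {}" using gle by force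
      then show ?thesis by blast
    next
      case 2
      have Z: "{x. L < x \<and> g x = 0} = {xs}"
      proof safe
        fix x assume x: "L < x" "g x = 0"
        show "x = xs"
        proof (rule ccontr)
          assume "x \<noteq> xs"
          then show False using gle[OF x(1)] x 2 by simp
        qed
      qed (use xs 2 in auto)
      have "keeps_sign_at g xs"
        unfolding keeps_sign_at_def
      proof (intro exI[of _ "xs - L"] conjI disjI2 allI impI)
        show "0 < xs - L" using xs by simp
      next
        fix x assume x: "0 < \<bar>x - xs\<bar> \<and> \<bar>x - xs\<bar> < xs - L"
        then have "L < x" "x \<noteq> xs" by (auto simp: abs_if split: if_splits)
        then show "g x < 0" using gle 2 by fastforce
      qed
      then show ?thesis using Z xs by blast
    next
      case 3
      obtain p where p: "L < p" "p < xs" "g p < 0" using C2[OF xs(1)] by blast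
      have "\<exists>x. p \<le> x \<and> x \<le> xs \<and> g x = 0"
        by (rule IVT') (use p 3 in \<open>auto intro: continuous_on_subset[OF C1]\<close>)
      then obtain x0 where x0: "p \<le> x0" "x0 \<le> xs" "g x0 = 0" by blast
      have x0xs: "x0 < xs" "L < x0" using x0 3 p by (cases "x0 = xs", auto)
      obtain q where q: "q > xs" "g q < 0" using C4 by blast
      have "\<exists>x. xs \<le> x \<and> x \<le> q \<and> g x = 0"
        by (rule IVT2') (use q 3 xs in \<open>auto intro: continuous_on_subset[OF C1]\<close>)
      then obtain x1 where x1: "xs \<le> x1" "x1 \<le> q" "g x1 = 0" by blast
      have x1xs: "xs < x1" using x1 3 by (cases "x1 = xs", auto)
      have ZZ: "x = x0 \<or> x = x1" if x: "L < x" "g x = 0" for x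
        proof (rule ccontr)
          assume "\<not> (x = x0 \<or> x = x1)"
          then consider "x < x0" | "x0 < x \<and> x < xs" | "x = xs" | "xs < x \<and> x < x1" | "x1 < x"
            by linarith
          then show False
          proof cases
            case 1 then show False using lf[of x x0] x x0 x0xs by simp
          next
            case 2 then show False using lf[of x0 x] x x0 x0xs by simp
          next
            case 3 then show False using x 3 \<open>g xs > 0\<close> by simp
          next
            case 4 then show False using rt[of x x1] x x1 by simp
          next
            case 5 then show False using rt[of x1 x] x x1 x1xs by simp
          qed
        qed
      have Z: "{x. L < x \<and> g x = 0} = {x0, x1}"
        using ZZ x0 x0xs x1 x1xs xs by auto
      have cs0: "changes_sign_at g x0"
        unfolding changes_sign_at_def
      proof (intro exI[of _ "min (x0 - L) (xs - x0)"] conjI disjI1 ballI)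
        show "0 < min (x0 - L) (xs - x0)" using x0xs by auto
      next
        fix x assume "x \<in> {x0 - min (x0 - L) (xs - x0)<..<x0}"
        then have "L < x" "x < x0" by auto
        then show "g x < 0" using lf[of x x0] x0 x0xs by simp
      next
        fix x assume "x \<in> {x0<..<x0 + min (x0 - L) (xs - x0)}"
        then have "x0 < x" "x \<le> xs" by auto
        then show "g x > 0" using lf[of x0 x] x0 x0xs by simp
      qed
      have cs1: "changes_sign_at g x1"
        unfolding changes_sign_at_def
      proof (intro exI[of _ "x1 - xs"] conjI disjI2 ballI)
        show "0 < x1 - xs" using x1xs by auto
      next
        fix x assume "x \<in> {x1 - (x1 - xs)<..<x1}"
        then have "xs \<le> x" "x < x1" by auto
        then show "g x > 0" using rt[of x x1] x1 by simp
      next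
        fix x assume "x \<in> {x1<..<x1 + (x1 - xs)}"
        then have "x1 < x" by auto
        then show "g x < 0" using rt[of x1 x] x1 x1xs by simp
      qed
      have "x0 \<noteq> x1" using x0xs x1xs by simp
      moreover have "g' x0 \<noteq> 0" "g' x1 \<noteq> 0" using nz x0xs x1xs xs by auto
      ultimately show ?thesis using Z cs0 cs1 by blast
    qed
  qed
qed




lemma sc_convex:
  assumes "strictly_convex_on S h" shows "convex_on S h"
  unfolding convex_on_def
proof (intro conjI ballI allI impI)
  show "convex S" using assms unfolding strictly_convex_on_def by blast
  fix x y and u v :: real assume xy: "x \<in> S" "y \<in> S" and uv: "0 \<le> u" "0 \<le> v" "u + v = 1"
  show "h (u *\<^sub>R x + v *\<^sub>R y) \<le> u * h x + v * h y"
  proof (cases "x = y \<or> u = 0 \<or> v = 0")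
    case True
    then show ?thesis
    proof (elim disjE)
      assume "x = y"
      then have "u *\<^sub>R x + v *\<^sub>R y = x" "u * h x + v * h y = h x"
        using uv by (simp_all add: algebra_simps flip: distrib_right)
      then show ?thesis by simp
    next
      assume "u = 0" then have "v = 1" using uv by simp
      then show ?thesis using \<open>u = 0\<close> by simp
    next
      assume "v = 0" then have "u = 1" using uv by simp
      then show ?thesis using \<open>v = 0\<close> by simp
    qed
  next
    case False
    then have "0 < v" "v < 1" "u = 1 - v" using uv by auto
    then have "h ((1 - v) * x + v * y) < (1 - v) * h x + v * h y"
      using assms xy False unfolding strictly_convex_on_def by blast
    then show ?thesis using \<open>u = 1 - v\<close> by simp
  qed
qed

lemma sc_ineq:
  fixes h :: "real \<Rightarrow> real"
  assumes "strictly_convex_on {0<..} h" "0 < p" "p < q" "0 < d"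
  shows "h (p + d) + h q < h p + h (q + d)"
proof -
  define r where "r = q + d"
  define t where "t = d / (r - p)"
  define s where "s = (q - p) / (r - p)"
  have rp: "r - p > 0" using assms by (simp add: r_def)
  have t: "0 < t" "t < 1" using assms rp by (simp_all add: t_def r_def field_simps)
  have s: "0 < s" "s < 1" using assms rp by (simp_all add: s_def r_def field_simps)
  have "t + s = (d + (q - p)) / (r - p)" by (simp add: t_def s_def add_divide_distrib)
  also have "\<dots> = 1" using rp by (simp add: r_def)
  finally have ts: "t + s = 1" .
  have "t * (r - p) = d" using rp by (simp add: t_def)
  then have e1: "(1 - t) * p + t * r = p + d" by (simp add: algebra_simps)
  have "s * (r - p) = q - p" using rp by (simp add: s_def)
  then have e2: "(1 - s) * p + s * r = q" by (simp add: algebra_simps)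
  have mem: "p \<in> {0<..}" "r \<in> {0<..}" "p \<noteq> r" using assms rp by auto
  have i1: "h ((1 - t) * p + t * r) < (1 - t) * h p + t * h r"
    using assms(1) mem t unfolding strictly_convex_on_def by blast
  have i2: "h ((1 - s) * p + s * r) < (1 - s) * h p + s * h r"
    using assms(1) mem s unfolding strictly_convex_on_def by blast
  have "h (p + d) + h q < (1 - t) * h p + t * h r + ((1 - s) * h p + s * h r)"
    using i1 i2 e1 e2 by simp
  also have "\<dots> = (2 - (t + s)) * h p + (t + s) * h r" by (simp add: algebra_simps)
  also have "\<dots> = h p + h (q + d)" using ts by (simp add: r_def)
  finally show ?thesis .
qed

context
  fixes f :: "real \<Rightarrow> real"
  assumes sh: "strongly_hyperbolic f"
begin

lemma sh_pos: "x > 0 \<Longrightarrow> f x > 0"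
  using sh unfolding strongly_hyperbolic_def by blast

lemma sh_der: "x > 0 \<Longrightarrow> (f has_real_derivative deriv f x) (at x)"
  using sh unfolding strongly_hyperbolic_def by (simp add: DERIV_deriv_iff_real_differentiable)

lemma sh_cont: "x > 0 \<Longrightarrow> isCont f x"
  using sh_der DERIV_isCont by blast

lemma sh_tangent:
  assumes "x > 0" "y > 0"
  shows "deriv f x * (y - x) \<le> f y - f x"
proof -
  have cv: "convex_on {0<..} f"
    using sh sc_convex unfolding strongly_hyperbolic_def by blast
  show ?thesis
  proof (rule convex_on_imp_above_tangent[OF cv])
    show "connected {0::real<..}" by (simp add: is_interval_connected is_interval_oi)
    show "x \<in> interior {0<..}" using assms by (simp add: interior_open)
    show "y \<in> {0<..}" using assms by simp
    show "(f has_real_derivative deriv f x) (at x within {0<..})"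
      using sh_der[OF assms(1)] by (rule has_field_derivative_at_within)
  qed
qed

lemma sh_dneg: assumes "x > 0" shows "deriv f x < 0"
proof (rule ccontr)
  assume "\<not> deriv f x < 0"
  then have ge: "f y \<ge> f x" if "y > x" for y
    using sh_tangent[of x y] assms that by (smt (verit) mult_nonneg_nonneg)
  have "(f \<longlongrightarrow> 0) at_top" using sh unfolding strongly_hyperbolic_def by blast
  then have "eventually (\<lambda>y. f y < f x) at_top"
    using sh_pos[OF assms] by (simp add: order_tendstoD(2))
  then have "eventually (\<lambda>y. f y < f x \<and> y > x) at_top"
    using eventually_gt_at_top[of x] by eventually_elim auto
  then obtain y where "f y < f x" "y > x"
    using eventually_happens'[OF trivial_limit_at_top_linorder] by blast
  with ge show False by force
qed

lemma sh_dec: assumes "0 < x" "x < y" shows "f y < f x"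
proof -
  have "deriv f y * (x - y) \<le> f x - f y" using sh_tangent[of y x] assms by simp
  moreover have "deriv f y * (x - y) > 0" using sh_dneg[of y] assms by (simp add: mult_neg_neg)
  ultimately show ?thesis by simp
qed

end




lemma cs_neg: "changes_sign_at (\<lambda>x. - g x) x0 \<longleftrightarrow> changes_sign_at g x0"
  unfolding changes_sign_at_def by (auto simp: disj_commute)

lemma ks_neg: "keeps_sign_at (\<lambda>x. - g x) x0 \<longleftrightarrow> keeps_sign_at g x0"
  unfolding keeps_sign_at_def by (auto simp: disj_commute)

theorem lemma3p5:
  fixes f :: "real \<Rightarrow> real" and a b c :: real
  assumes "strongly_hyperbolic f" and "a > 0" and "b \<noteq> 0" and "c \<noteq> 0"
  defines "g \<equiv> fcheck f a b c" and "Z \<equiv> roots (fcheck f a b c) (fcheck_dom b)"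
  shows "finite Z \<and> card Z \<le> 2 \<and>
    exactly_one
     [ (\<exists>x0 x1. x0 \<noteq> x1 \<and> Z = {x0, x1} \<and>
          changes_sign_at g x0 \<and> changes_sign_at g x1 \<and>
          deriv g x0 \<noteq> 0 \<and> deriv g x1 \<noteq> 0 \<and>
          ((a < 1 \<and> b < 0 \<and> c > 0) \<or> (a > 1 \<and> b > 0 \<and> c < 0))),
       (\<exists>x0. Z = {x0} \<and> keeps_sign_at g x0 \<and> deriv g x0 = 0 \<and>
          ((a < 1 \<and> b < 0 \<and> c > 0) \<or> (a > 1 \<and> b > 0 \<and> c < 0))),
       (\<exists>x0. Z = {x0} \<and> changes_sign_at g x0 \<and> deriv g x0 \<noteq> 0 \<and> b * c > 0),
       (Z = {} \<and> b * c < 0) ]"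
proof -
  note sh = assms(1)
  have apos: "a > 0" by fact
  define L where "L = max (-b) 0"
  define g' where "g' = (\<lambda>x. a * deriv f (x+b) - deriv f x)"
  define h where "h = (\<lambda>x. ln \<bar>deriv f x\<bar>)"
  define psi where "psi = (\<lambda>x. h x - h (x+b) - ln a)"
  have dom: "L < x \<longleftrightarrow> 0 < x \<and> 0 < x + b" for x by (auto simp: L_def)
  have gdef: "g x = a * f (x+b) + c - f x" for x by (simp add: g_def fcheck_def)
  have Zeq: "Z = {x. L < x \<and> g x = 0}"
    unfolding Z_def g_def roots_def fcheck_dom_def L_def by auto
  have der: "(g has_real_derivative g' x) (at x)" if "L < x" for x
  proof -
    have x: "0 < x" "0 < x + b" using dom that by auto
    have d1: "((\<lambda>x. f (x + b)) has_real_derivative deriv f (x+b)) (at x)"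
      using sh_der[OF sh x(2)] DERIV_shift by blast
    have "((\<lambda>x. a * f (x + b) + c - f x) has_real_derivative a * deriv f (x+b) + 0 - deriv f x) (at x)"
      by (intro DERIV_diff DERIV_add DERIV_cmult d1 DERIV_const sh_der[OF sh x(1)])
    moreover have "g = (\<lambda>x. a * f (x + b) + c - f x)" using gdef by auto
    ultimately show ?thesis by (simp add: g'_def)
  qed
  have dg: "deriv g x = g' x" if "L < x" for x using der[OF that] by (rule DERIV_imp_deriv)
  have sg: "(g' x < 0 \<longleftrightarrow> psi x < 0) \<and> (g' x = 0 \<longleftrightarrow> psi x = 0)" if "L < x" for x
  proof -
    have x: "0 < x" "0 < x + b" using dom that by auto
    define u where "u = - deriv f x"
    define v where "v = - deriv f (x+b)"
    have u: "u > 0" using sh_dneg[OF sh x(1)] by (simp add: u_def)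
    have v: "v > 0" using sh_dneg[OF sh x(2)] by (simp add: v_def)
    have av: "a * v > 0" using apos v by simp
    have e1: "g' x = u - a * v" by (simp add: g'_def u_def v_def)
    have "h x = ln u" "h (x+b) = ln v" using u v by (simp_all add: h_def u_def v_def)
    then have e2: "psi x = ln u - ln (a * v)" using apos v by (simp add: psi_def ln_mult)
    have "u < a * v \<longleftrightarrow> ln u < ln (a * v)" using u av by simp
    moreover have "u = a * v \<longleftrightarrow> ln u = ln (a * v)" using u av by simp
    ultimately show ?thesis using e1 e2 by auto
  qed
  have sgn: "g' x < 0 \<longleftrightarrow> psi x < 0" and sg0: "g' x = 0 \<longleftrightarrow> psi x = 0" if "L < x" for x
    using sg[OF that] by auto
  have hc: "strictly_convex_on {0<..} h"
    using sh unfolding strongly_hyperbolic_def h_def by blast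
  have f0: "(f \<longlongrightarrow> 0) at_top" using sh unfolding strongly_hyperbolic_def by blast
  have finf: "filterlim f at_top (at_right 0)" using sh unfolding strongly_hyperbolic_def by blast
  have "filterlim (\<lambda>x. b + x) at_top at_top"
    by (rule filterlim_tendsto_add_at_top[OF tendsto_const filterlim_ident])
  from filterlim_compose[OF f0 this] have fb0: "((\<lambda>x. f (x + b)) \<longlongrightarrow> 0) at_top"
    by (simp add: add.commute)
  have "((\<lambda>x. a * f (x + b) + c - f x) \<longlongrightarrow> a * 0 + c - 0) at_top"
    by (intro tendsto_intros fb0 f0)
  moreover have "g = (\<lambda>x. a * f (x + b) + c - f x)" using gdef by auto
  ultimately have top: "(g \<longlongrightarrow> c) at_top" by simp
  have key: "(b * c > 0 \<and> (\<exists>x0. Z = {x0} \<and> changes_sign_at g x0 \<and> g' x0 \<noteq> 0)) \<or>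
     (b * c < 0 \<and> (Z \<noteq> {} \<longrightarrow> ((a < 1 \<and> b < 0 \<and> c > 0) \<or> (a > 1 \<and> b > 0 \<and> c < 0))) \<and>
      (Z = {} \<or> (\<exists>x0. Z = {x0} \<and> keeps_sign_at g x0 \<and> g' x0 = 0) \<or>
       (\<exists>x0 x1. x0 \<noteq> x1 \<and> Z = {x0, x1} \<and> changes_sign_at g x0 \<and>
          changes_sign_at g x1 \<and> g' x0 \<noteq> 0 \<and> g' x1 \<noteq> 0)))"
  proof (cases "b > 0")
    case bpos: True
    have L0: "L = 0" using bpos by (simp add: L_def)
    have mono: "(\<forall>x y. L < x \<longrightarrow> x < y \<longrightarrow> psi x < psi y) \<or> (\<forall>x y. L < x \<longrightarrow> x < y \<longrightarrow> psi y < psi x)"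
    proof (intro disjI2 allI impI)
      fix x y assume "L < x" "x < y"
      then have "h (x + b) + h y < h x + h (y + b)" using sc_ineq[OF hc, of x y b] bpos L0 by simp
      then show "psi y < psi x" by (simp add: psi_def)
    qed
    have c1: "((\<lambda>x. x + b) \<longlongrightarrow> 0 + b) (at_right 0)" by (intro tendsto_intros)
    have c2: "((\<lambda>x. f (x + b)) \<longlongrightarrow> f (0 + b)) (at_right 0)"
      by (rule isCont_tendsto_compose[OF sh_cont[OF sh] c1]) (use bpos in simp)
    have t1: "((\<lambda>x. a * f (x + b) + c) \<longlongrightarrow> a * f (0 + b) + c) (at_right 0)"
      by (intro tendsto_intros c2)
    have t2: "filterlim (\<lambda>x. - f x) at_bot (at_right 0)"
      using filterlim_uminus_at_top[THEN iffD1, OF finf] .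
    have "filterlim (\<lambda>x. (a * f (x + b) + c) + (- f x)) at_bot (at_right 0)"
      using filterlim_tendsto_add_at_bot_iff[OF t1, THEN iffD2, OF t2] .
    moreover have "g = (\<lambda>x. (a * f (x + b) + c) + (- f x))" using gdef by auto
    ultimately have lim: "filterlim g at_bot (at_right L)" using L0 by simp
    show ?thesis
    proof (cases "c > 0")
      case True
      from AL_pos[OF der sgn sg0 mono lim top True] show ?thesis
        using True bpos Zeq by auto
    next
      case False
      then have cneg: "c < 0" using assms(4) by simp
      have R: "Z = {} \<or> (\<exists>x0. Z = {x0} \<and> keeps_sign_at g x0 \<and> g' x0 = 0) \<or>
       (\<exists>x0 x1. x0 \<noteq> x1 \<and> Z = {x0, x1} \<and> changes_sign_at g x0 \<and>
          changes_sign_at g x1 \<and> g' x0 \<noteq> 0 \<and> g' x1 \<noteq> 0)"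
        using AL_neg[OF der sgn sg0 mono lim top cneg] Zeq by simp
      have A: "a > 1" if "Z \<noteq> {}"
      proof (rule ccontr)
        assume "\<not> a > 1"
        have "g x < 0" if "L < x" for x
        proof -
          have x: "0 < x" "x < x + b" using that bpos L0 by auto
          have "f (x + b) < f x" using sh_dec[OF sh x] .
          moreover have "a * f (x + b) \<le> f (x + b)"
            using \<open>\<not> a > 1\<close> sh_pos[OF sh, of "x+b"] x by (simp add: mult_le_cancel_right1)
          ultimately show ?thesis using gdef[of x] cneg by simp
        qed
        then have "Z = {}" using Zeq by force
        with that show False by simp
      qed
      have "b * c < 0" using bpos cneg by (simp add: mult_pos_neg)
      then show ?thesis using R A bpos cneg by blast
    qed
  next
    case False
    then have bneg: "b < 0" using assms(3) by simp
    have L0: "L = - b" using bneg by (simp add: L_def)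
    have mono': "\<forall>x y. L < x \<longrightarrow> x < y \<longrightarrow> psi x < psi y"
    proof (intro allI impI)
      fix x y assume xy: "L < x" "x < y"
      then have "h (x + b + - b) + h (y + b) < h (x + b) + h (y + b + - b)"
        using sc_ineq[OF hc, of "x + b" "y + b" "- b"] bneg L0 by simp
      then show "psi x < psi y" by (simp add: psi_def)
    qed
    have nder: "((\<lambda>x. - g x) has_real_derivative (\<lambda>x. - g' x) x) (at x)" if "L < x" for x
      using DERIV_minus[OF der[OF that]] by simp
    have nsgn: "(\<lambda>x. - g' x) x < 0 \<longleftrightarrow> (\<lambda>x. - psi x) x < 0" if "L < x" for x
      using sgn[OF that] sg0[OF that] by auto
    have nsg0: "(\<lambda>x. - g' x) x = 0 \<longleftrightarrow> (\<lambda>x. - psi x) x = 0" if "L < x" for x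
      using sg0[OF that] by auto
    have nmono: "(\<forall>x y. L < x \<longrightarrow> x < y \<longrightarrow> (\<lambda>x. - psi x) x < (\<lambda>x. - psi x) y) \<or>
        (\<forall>x y. L < x \<longrightarrow> x < y \<longrightarrow> (\<lambda>x. - psi x) y < (\<lambda>x. - psi x) x)"
      using mono' by simp
    have c2: "(f \<longlongrightarrow> f (- b)) (at_right (- b))"
      using isCont_tendsto_compose[OF sh_cont[OF sh] tendsto_ident_at, of "- b" "{- b<..}"] bneg by simp
    have t1: "((\<lambda>x. f x - c) \<longlongrightarrow> f (- b) - c) (at_right (- b))"
      by (intro tendsto_intros c2)
    have "filterlim (\<lambda>x. a * f (x + - b + b)) at_top (at_right 0)"
      using filterlim_tendsto_pos_mult_at_top[OF tendsto_const apos finf] by simp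
    then have "filterlim (\<lambda>x. a * f (x + b)) at_top (at_right (- b))"
      using filterlim_at_right_to_0 by blast
    then have t2: "filterlim (\<lambda>x. - (a * f (x + b))) at_bot (at_right (- b))"
      using filterlim_uminus_at_top[THEN iffD1] by blast
    have "filterlim (\<lambda>x. (f x - c) + (- (a * f (x + b)))) at_bot (at_right (- b))"
      using filterlim_tendsto_add_at_bot_iff[OF t1, THEN iffD2, OF t2] .
    moreover have "(\<lambda>x. - g x) = (\<lambda>x. (f x - c) + (- (a * f (x + b))))" using gdef by auto
    ultimately have nlim: "filterlim (\<lambda>x. - g x) at_bot (at_right L)" using L0 by simp
    have ntop: "((\<lambda>x. - g x) \<longlongrightarrow> - c) at_top" using tendsto_minus[OF top] .
    have nZ: "{x. L < x \<and> - g x = 0} = Z" using Zeq by simp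
    show ?thesis
    proof (cases "c < 0")
      case True
      then have "- c > 0" by simp
      from AL_pos[OF nder nsgn nsg0 nmono nlim ntop this] show ?thesis
        using True bneg nZ by (auto simp: cs_neg mult_neg_neg)
    next
      case False
      then have cpos: "c > 0" using assms(4) by simp
      then have "- c < 0" by simp
      from AL_neg[OF nder nsgn nsg0 nmono nlim ntop this]
      have R: "Z = {} \<or> (\<exists>x0. Z = {x0} \<and> keeps_sign_at g x0 \<and> g' x0 = 0) \<or>
       (\<exists>x0 x1. x0 \<noteq> x1 \<and> Z = {x0, x1} \<and> changes_sign_at g x0 \<and>
          changes_sign_at g x1 \<and> g' x0 \<noteq> 0 \<and> g' x1 \<noteq> 0)"
        unfolding nZ cs_neg ks_neg by simp
      have A: "a < 1" if "Z \<noteq> {}"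
      proof (rule ccontr)
        assume "\<not> a < 1"
        have "g x > 0" if "L < x" for x
        proof -
          have x: "0 < x + b" "x + b < x" using that bneg L0 by auto
          have "f x < f (x + b)" using sh_dec[OF sh x] .
          moreover have "f (x + b) \<le> a * f (x + b)"
            using \<open>\<not> a < 1\<close> sh_pos[OF sh, of "x+b"] x by (simp add: mult_le_cancel_right1)
          ultimately show ?thesis using gdef[of x] cpos by simp
        qed
        then have "Z = {}" using Zeq by force
        with that show False by simp
      qed
      have "b * c < 0" using bneg cpos by (simp add: mult_neg_pos)
      then show ?thesis using R A bneg cpos by blast
    qed
  qed
  have condbc: "b * c < 0" if "(a < 1 \<and> b < 0 \<and> c > 0) \<or> (a > 1 \<and> b > 0 \<and> c < 0)"
    using that by (auto simp: mult_neg_pos mult_pos_neg)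
  have inZ: "L < x" if "x \<in> Z" for x using that Zeq by auto
  show ?thesis
  proof (rule disjE[OF key])
    assume "b * c > 0 \<and> (\<exists>x0. Z = {x0} \<and> changes_sign_at g x0 \<and> g' x0 \<noteq> 0)"
    then have bc: "b * c > 0" and "\<exists>x0. Z = {x0} \<and> changes_sign_at g x0 \<and> g' x0 \<noteq> 0" by blast+
    then obtain x0 where x0: "Z = {x0}" "changes_sign_at g x0" "g' x0 \<noteq> 0" by blast
    have d0: "deriv g x0 = g' x0" using dg inZ x0(1) by auto
    have P3: "\<exists>x0. Z = {x0} \<and> changes_sign_at g x0 \<and> deriv g x0 \<noteq> 0 \<and> b * c > 0"
      using x0 d0 bc by auto
    have nc: "\<not> ((a < 1 \<and> b < 0 \<and> c > 0) \<or> (a > 1 \<and> b > 0 \<and> c < 0))" using condbc bc by force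
    show ?thesis using P3 nc bc x0(1) by (simp add: exactly_one_def)
  next
    assume BB: "b * c < 0 \<and> (Z \<noteq> {} \<longrightarrow> ((a < 1 \<and> b < 0 \<and> c > 0) \<or> (a > 1 \<and> b > 0 \<and> c < 0))) \<and>
      (Z = {} \<or> (\<exists>x0. Z = {x0} \<and> keeps_sign_at g x0 \<and> g' x0 = 0) \<or>
       (\<exists>x0 x1. x0 \<noteq> x1 \<and> Z = {x0, x1} \<and> changes_sign_at g x0 \<and>
          changes_sign_at g x1 \<and> g' x0 \<noteq> 0 \<and> g' x1 \<noteq> 0))"
    then have bc: "b * c < 0" and A: "Z \<noteq> {} \<longrightarrow> ((a < 1 \<and> b < 0 \<and> c > 0) \<or> (a > 1 \<and> b > 0 \<and> c < 0))"
      and R: "Z = {} \<or> (\<exists>x0. Z = {x0} \<and> keeps_sign_at g x0 \<and> g' x0 = 0) \<or>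
       (\<exists>x0 x1. x0 \<noteq> x1 \<and> Z = {x0, x1} \<and> changes_sign_at g x0 \<and>
          changes_sign_at g x1 \<and> g' x0 \<noteq> 0 \<and> g' x1 \<noteq> 0)" by blast+
    have n3: "\<not> (b * c > 0)" using bc by simp
    from R show ?thesis
    proof (elim disjE)
      assume "Z = {}"
      then show ?thesis using bc by (simp add: exactly_one_def)
    next
      assume "\<exists>x0. Z = {x0} \<and> keeps_sign_at g x0 \<and> g' x0 = 0"
      then obtain x0 where x0: "Z = {x0}" "keeps_sign_at g x0" "g' x0 = 0" by blast
      have d0: "deriv g x0 = g' x0" using dg inZ x0(1) by auto
      have C: "(a < 1 \<and> b < 0 \<and> c > 0) \<or> (a > 1 \<and> b > 0 \<and> c < 0)" using A x0 by auto
      have P2: "\<exists>x0. Z = {x0} \<and> keeps_sign_at g x0 \<and> deriv g x0 = 0 \<and>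
          ((a < 1 \<and> b < 0 \<and> c > 0) \<or> (a > 1 \<and> b > 0 \<and> c < 0))" using x0 d0 C by auto
      have n1: "\<not> (\<exists>x0 x1. x0 \<noteq> x1 \<and> Z = {x0, x1} \<and> P x0 x1)" for P
      proof
        assume "\<exists>y0 y1. y0 \<noteq> y1 \<and> Z = {y0, y1} \<and> P y0 y1"
        then obtain y0 y1 where "y0 \<noteq> y1" "Z = {y0, y1}" by blast
        then have "y0 \<in> {x0}" "y1 \<in> {x0}" using x0(1) by auto
        then show False using \<open>y0 \<noteq> y1\<close> by simp
      qed
      show ?thesis using P2 n1 n3 x0(1) by (simp add: exactly_one_def)
    next
      assume "\<exists>x0 x1. x0 \<noteq> x1 \<and> Z = {x0, x1} \<and> changes_sign_at g x0 \<and>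
          changes_sign_at g x1 \<and> g' x0 \<noteq> 0 \<and> g' x1 \<noteq> 0"
      then obtain x0 x1 where x: "x0 \<noteq> x1" "Z = {x0, x1}" "changes_sign_at g x0"
          "changes_sign_at g x1" "g' x0 \<noteq> 0" "g' x1 \<noteq> 0" by blast
      have d0: "deriv g x0 = g' x0" "deriv g x1 = g' x1" using dg inZ x(2) by auto
      have "Z \<noteq> {}" using x(2) by simp
      then have C: "(a < 1 \<and> b < 0 \<and> c > 0) \<or> (a > 1 \<and> b > 0 \<and> c < 0)" using A by blast
      have P1: "\<exists>x0 x1. x0 \<noteq> x1 \<and> Z = {x0, x1} \<and>
          changes_sign_at g x0 \<and> changes_sign_at g x1 \<and>
          deriv g x0 \<noteq> 0 \<and> deriv g x1 \<noteq> 0 \<and>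
          ((a < 1 \<and> b < 0 \<and> c > 0) \<or> (a > 1 \<and> b > 0 \<and> c < 0))"
        by (rule exI[of _ x0], rule exI[of _ x1]) (use x d0 C in simp)
      have n2: "\<not> (\<exists>y. Z = {y} \<and> P y)" for P
      proof
        assume "\<exists>y. Z = {y} \<and> P y"
        then obtain y where "Z = {y}" by blast
        then have "x0 \<in> {y}" "x1 \<in> {y}" using x(2) by auto
        then show False using x(1) by simp
      qed
      show ?thesis using P1 n2 n3 x(1,2) by (simp add: exactly_one_def)
    qed
  qed
qed


end
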